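(* Let $Z$ be a real random variable such that for some $\theta>0$, $\Pr[|Z-\mathbb E[Z]|\ge\xi]\le 2e^{-\xi^2\theta^2/2}$ for all $\xi\ge0$. Then for every $\kappa>0$, $$\Pr[Z\ge\mathbb E[Z]]\ge\frac{\theta^2\operatorname{Var}[Z]}{2\kappa^2}-2e^{-\kappa^2/2}\left(1+\sqrt2+\frac{\sqrt{2\pi}}{\kappa}+\frac1{\kappa^2}\right).$$ *)

theory Defs
  imports "HOL-Probability.Probability"
begin

end

theory Submission
  imports Defs "HOL-Real_Asymp.Real_Asymp"
begin

lemma ptwise:
  fixes a d :: real assumes "a > 0"
  shows "d\<^sup>2 + a * d \<le> 2 * a\<^sup>2 * (if d \<ge> 0 then 1 else 0) + (if \<bar>d\<bar> \<ge> a then 2 * a * \<bar>d\<bar> + d\<^sup>2 else 0)"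
proof (cases "\<bar>d\<bar> \<ge> a")
  case True
  then show ?thesis using assms by (cases "d \<ge> 0") (auto simp: power2_eq_square intro: mult_nonneg_nonpos)
next
  case False
  show ?thesis
  proof (cases "d \<ge> 0")
    case True
    have h1: "d * d \<le> a * d" using True False by (intro mult_right_mono) auto
    have h2: "a * d \<le> a * a" using True False assms by (intro mult_left_mono) auto
    have "d\<^sup>2 + a * d \<le> 2 * a\<^sup>2" unfolding power2_eq_square using h1 h2 by linarith
    then show ?thesis using True False by simp
  next
    case c: False
    have h1: "(-d) * (-d) \<le> a * (-d)" using c False by (intro mult_right_mono) auto
    have "d\<^sup>2 + a * d \<le> 0" unfolding power2_eq_square using h1 by (simp add: algebra_simps)
    then show ?thesis using c False by simp
  qed
qed

lemma gauss_pt: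
  fixes a t \<theta> :: real assumes "a > 0" "\<theta> > 0" "t \<ge> a"
  shows "exp (- (t\<^sup>2 * \<theta>\<^sup>2) / 2) \<le> exp (1/2) * exp (-((a*\<theta>)\<^sup>2)/2) * exp (- \<theta> * (t - a))"
proof -
  have "\<theta> * t - \<theta> * a \<ge> 0" using assms by (simp add: mult_left_mono)
  then have "\<theta> * a * (\<theta> * t - \<theta> * a) \<ge> 0" using assms by simp
  moreover have "(\<theta> * t - \<theta> * a - 1)\<^sup>2 \<ge> 0" by simp
  ultimately have "- (t\<^sup>2 * \<theta>\<^sup>2) / 2 \<le> 1/2 + (-((a*\<theta>)\<^sup>2)/2) + (- \<theta> * (t - a))"
    by (simp add: power2_eq_square algebra_simps)
  then show ?thesis by (simp add: exp_add[symmetric])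
qed

lemma layer_pt:
  fixes a s :: real assumes "a > 0"
  shows "(\<integral>\<^sup>+t. ennreal ((2*a+2*t) * (if a \<le> t \<and> t \<le> s then 1 else 0)) \<partial>lborel)
     = ennreal (if a \<le> s then 2 * a * s + s ^ 2 - 3 * a ^ 2 else 0)"
proof (cases "a \<le> s")
  case True
  have "((\<lambda>t. 2*a+2*t) has_integral ((2 * a * s + s ^ 2) - (2 * a * a + a ^ 2))) {a..s}"
    apply (rule fundamental_theorem_of_calculus[OF True])
    apply (auto intro!: derivative_eq_intros simp: has_real_derivative_iff_has_vector_derivative[symmetric])
    done
  from nn_integral_has_integral_lebesgue'[OF _ this] assms True
  have "(\<integral>\<^sup>+t. ennreal (2*a+2*t) * indicator {a..s} t \<partial>lborel) = ennreal ((2 * a * s + s ^ 2) - (2 * a * a + a ^ 2))"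
    by auto
  moreover have "(\<integral>\<^sup>+t. ennreal ((2*a+2*t) * (if a \<le> t \<and> t \<le> s then 1 else 0)) \<partial>lborel) =
     (\<integral>\<^sup>+t. ennreal (2*a+2*t) * indicator {a..s} t \<partial>lborel)"
    by (rule nn_integral_cong) (auto simp: indicator_def)
  ultimately show ?thesis using True by (simp add: power2_eq_square)
next
  case False
  have X: "(\<lambda>t. ennreal ((2*a+2*t) * (if a \<le> t \<and> t \<le> s then 1 else 0))) = (\<lambda>t. 0)"
    using False by (auto simp: fun_eq_iff)
  show ?thesis unfolding X using False by simp
qed

lemma FTC_part:
  fixes a \<theta> C :: real assumes "a > 0" "\<theta> > 0" "C \<ge> 0"
  shows "(\<integral>\<^sup>+t. ennreal (4 * t * exp (- (t\<^sup>2 * \<theta>\<^sup>2) / 2) + C * exp (- \<theta> * (t - a))) * indicator {a..} t \<partial>lborel)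
     = ennreal (4 * exp (- (a\<^sup>2 * \<theta>\<^sup>2) / 2) / \<theta>\<^sup>2 + C / \<theta>)"
proof -
  define F where "F t = - (4 / \<theta>\<^sup>2) * exp (- (t\<^sup>2 * \<theta>\<^sup>2) / 2) - (C / \<theta>) * exp (- \<theta> * (t - a))" for t
  have "(\<integral>\<^sup>+t. ennreal (4 * t * exp (- (t\<^sup>2 * \<theta>\<^sup>2) / 2) + C * exp (- \<theta> * (t - a))) * indicator {a..} t \<partial>lborel)
     = 0 - F a"
  proof (rule nn_integral_FTC_atLeast)
    show "(\<lambda>t. 4 * t * exp (- (t\<^sup>2 * \<theta>\<^sup>2) / 2) + C * exp (- \<theta> * (t - a))) \<in> borel_measurable borel"
      by measurable
    fix x assume "a \<le> x"
    then show "0 \<le> 4 * x * exp (- (x\<^sup>2 * \<theta>\<^sup>2) / 2) + C * exp (- \<theta> * (x - a))"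
      using assms by simp
    show "(F has_real_derivative 4 * x * exp (- (x\<^sup>2 * \<theta>\<^sup>2) / 2) + C * exp (- \<theta> * (x - a))) (at x)"
      unfolding F_def
      by (rule derivative_eq_intros refl | simp)+ (use assms in \<open>simp add: field_simps power2_eq_square\<close>)
  next
    show "(F \<longlongrightarrow> 0) at_top" unfolding F_def using assms by real_asymp
  qed
  also have "0 - F a = 4 * exp (- (a\<^sup>2 * \<theta>\<^sup>2) / 2) / \<theta>\<^sup>2 + C / \<theta>"
    by (simp add: F_def)
  finally show ?thesis .
qed

theorem corollary3:
  fixes M :: "'a measure" and Z :: "'a \<Rightarrow> real" and \<theta> \<kappa> :: real
  assumes "prob_space M"
    and "Z \<in> borel_measurable M"
    and "integrable M Z"
    and "\<theta> > 0"
    and "\<And>\<xi>. \<xi> \<ge> 0 \<Longrightarrow>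
           measure M {x \<in> space M. \<bar>Z x - (\<integral>y. Z y \<partial>M)\<bar> \<ge> \<xi>} \<le> 2 * exp (- (\<xi>\<^sup>2 * \<theta>\<^sup>2) / 2)"
    and "\<kappa> > 0"
  shows "measure M {x \<in> space M. Z x \<ge> (\<integral>y. Z y \<partial>M)}
         \<ge> \<theta>\<^sup>2 * (\<integral>y. (Z y - (\<integral>z. Z z \<partial>M))\<^sup>2 \<partial>M) / (2 * \<kappa>\<^sup>2)
           - 2 * exp (- (\<kappa>\<^sup>2) / 2) * (1 + sqrt 2 + sqrt (2 * pi) / \<kappa> + 1 / \<kappa>\<^sup>2)"
proof -
  interpret P: prob_space M by fact
  interpret PS: pair_sigma_finite M lborel ..
  note [measurable] = assms(2)
  define \<mu> where "\<mu> = (\<integral>y. Z y \<partial>M)"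
  define a where "a = \<kappa> / \<theta>"
  define E where "E = exp (- (\<kappa>\<^sup>2) / 2)"
  define V where "V = (\<integral>y. (Z y - \<mu>)\<^sup>2 \<partial>M)"
  define Sp where "Sp = {x \<in> space M. Z x \<ge> \<mu>}"
  define p where "p = measure M Sp"
  have a: "a > 0" "a * \<theta> = \<kappa>" using assms(4,6) by (auto simp: a_def)
  have E: "E > 0" by (simp add: E_def)
  have Ea: "exp (- ((a * \<theta>)\<^sup>2) / 2) = E" using a by (simp add: E_def)
  have Ea2: "exp (- (a\<^sup>2 * \<theta>\<^sup>2) / 2) = E" using Ea by (simp add: power_mult_distrib)
  have tail: "measure M {x \<in> space M. t \<le> \<bar>Z x - \<mu>\<bar>} \<le> 2 * exp (- (t\<^sup>2 * \<theta>\<^sup>2) / 2)" if "t \<ge> 0" for t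
    using assms(5)[OF that] by (simp add: \<mu>_def)
  have key: "V \<le> 2 * a\<^sup>2 * p + (6 * a\<^sup>2 * E + (4 * E / \<theta>\<^sup>2 + 4 * a * exp (1/2) * E / \<theta>))"
  proof (cases "integrable M (\<lambda>y. (Z y - \<mu>)\<^sup>2)")
    case False
    then have "V = 0" by (simp add: V_def not_integrable_integral_eq)
    moreover have "p \<ge> 0" by (simp add: p_def)
    ultimately show ?thesis using a E assms(4) by (simp add: add_nonneg_nonneg)
  next
    case True
    define D where "D x = Z x - \<mu>" for x
    define g where "g x = (if a \<le> \<bar>D x\<bar> then 2 * a * \<bar>D x\<bar> + (D x)\<^sup>2 else 0)" for x
    define C where "C = 4 * a * exp (1/2) * E"
    have C: "C \<ge> 0" using a E by (simp add: C_def)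
    have Dm[measurable]: "D \<in> borel_measurable M" unfolding D_def by measurable
    have gm[measurable]: "g \<in> borel_measurable M" unfolding g_def by measurable
    have Spm[measurable]: "Sp \<in> sets M" unfolding Sp_def by measurable
    have intD: "integrable M D" unfolding D_def using assms(3) by (intro Bochner_Integration.integrable_diff) auto
    have intD2: "integrable M (\<lambda>x. (D x)\<^sup>2)" using True unfolding D_def .
    have gnn: "g x \<ge> 0" for x using a by (simp add: g_def)
    have intg: "integrable M g"
    proof (rule Bochner_Integration.integrable_bound[of M "\<lambda>x. 3 * (D x)\<^sup>2"])
      show "integrable M (\<lambda>x. 3 * (D x)\<^sup>2)" using intD2 by simp
      show "g \<in> borel_measurable M" by measurable
      show "AE x in M. norm (g x) \<le> norm (3 * (D x)\<^sup>2)"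
      proof (rule AE_I2)
        fix x
        have "2 * a * \<bar>D x\<bar> \<le> 2 * \<bar>D x\<bar> * \<bar>D x\<bar>" if "a \<le> \<bar>D x\<bar>"
          using that a by (simp add: mult_right_mono)
        moreover have "\<bar>D x\<bar> * \<bar>D x\<bar> = (D x)\<^sup>2" by (simp add: power2_eq_square)
        ultimately have "g x \<le> 3 * (D x)\<^sup>2" unfolding g_def by auto
        then show "norm (g x) \<le> norm (3 * (D x)\<^sup>2)" using gnn[of x] by simp
      qed
    qed
    have intI: "integrable M (\<lambda>x. 2 * a\<^sup>2 * indicator Sp x + g x)"
      using intg by (intro Bochner_Integration.integrable_add integrable_mult_right integrable_real_indicator) (auto simp: P.emeasure_eq_measure)
    have intL: "integrable M (\<lambda>x. (D x)\<^sup>2 + a * D x)"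
      using intD intD2 by (intro Bochner_Integration.integrable_add integrable_mult_right) auto
    have "(\<integral>x. (D x)\<^sup>2 + a * D x \<partial>M) \<le> (\<integral>x. 2 * a\<^sup>2 * indicator Sp x + g x \<partial>M)"
    proof (rule integral_mono[OF intL intI])
      fix x assume x: "x \<in> space M"
      have "indicator Sp x = (if D x \<ge> 0 then 1 else 0 :: real)"
        using x by (simp add: Sp_def D_def indicator_def)
      then show "(D x)\<^sup>2 + a * D x \<le> 2 * a\<^sup>2 * indicator Sp x + g x"
        using ptwise[OF a(1), of "D x"] by (simp add: g_def)
    qed
    moreover have "(\<integral>x. (D x)\<^sup>2 + a * D x \<partial>M) = V"
    proof -
      have "(\<integral>x. D x \<partial>M) = 0"
        unfolding D_def using assms(3) by (simp add: \<mu>_def Bochner_Integration.integral_diff P.prob_space)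
      moreover have "(\<integral>x. (D x)\<^sup>2 + a * D x \<partial>M) = (\<integral>x. (D x)\<^sup>2 \<partial>M) + a * (\<integral>x. D x \<partial>M)"
        using intD intD2 by (simp add: Bochner_Integration.integral_add)
      moreover have "(\<integral>x. (D x)\<^sup>2 \<partial>M) = V" by (simp add: V_def D_def)
      ultimately show ?thesis by simp
    qed
    moreover have "(\<integral>x. 2 * a\<^sup>2 * indicator Sp x + g x \<partial>M) = 2 * a\<^sup>2 * p + (\<integral>x. g x \<partial>M)"
    proof -
      have intS: "integrable M (\<lambda>x. 2 * a\<^sup>2 * indicator Sp x)"
        by (intro integrable_mult_right integrable_real_indicator) (auto simp: P.emeasure_eq_measure)
      have "Sp \<inter> space M = Sp" by (auto simp: Sp_def)
      then show ?thesis using intg intS by (simp add: Bochner_Integration.integral_add p_def)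
    qed
    moreover have "(\<integral>x. g x \<partial>M) \<le> 6 * a\<^sup>2 * E + (4 * E / \<theta>\<^sup>2 + C / \<theta>)"
    proof -
      define h where "h x t = ennreal ((2 * a + 2 * t) * (if a \<le> t \<and> t \<le> \<bar>D x\<bar> then 1 else 0))" for x t
      define A where "A = {x \<in> space M. a \<le> \<bar>D x\<bar>}"
      have Am[measurable]: "A \<in> sets M" unfolding A_def by measurable
      have hm[measurable]: "case_prod h \<in> borel_measurable (M \<Otimes>\<^sub>M lborel)"
        unfolding h_def by measurable
      have "ennreal (\<integral>x. g x \<partial>M) = (\<integral>\<^sup>+x. ennreal (g x) \<partial>M)"
        using intg gnn by (intro nn_integral_eq_integral[symmetric]) auto
      also have "\<dots> = (\<integral>\<^sup>+x. ennreal (3 * a\<^sup>2) * indicator A x + (\<integral>\<^sup>+t. h x t \<partial>lborel) \<partial>M)"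
      proof (rule nn_integral_cong)
        fix x assume x: "x \<in> space M"
        have L: "(\<integral>\<^sup>+t. h x t \<partial>lborel) = ennreal (if a \<le> \<bar>D x\<bar> then 2 * a * \<bar>D x\<bar> + \<bar>D x\<bar> ^ 2 - 3 * a ^ 2 else 0)"
          unfolding h_def by (rule layer_pt[OF a(1)])
        show "ennreal (g x) = ennreal (3 * a\<^sup>2) * indicator A x + (\<integral>\<^sup>+t. h x t \<partial>lborel)"
        proof (cases "a \<le> \<bar>D x\<bar>")
          case True
          have "0 \<le> (\<bar>D x\<bar> - a) * (\<bar>D x\<bar> + 3 * a)" using True a by (intro mult_nonneg_nonneg) auto
          then have nn: "0 \<le> 2 * a * \<bar>D x\<bar> + \<bar>D x\<bar> ^ 2 - 3 * a ^ 2" by (simp add: algebra_simps power2_eq_square)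
          have "ennreal (g x) = ennreal (3 * a\<^sup>2 + (2 * a * \<bar>D x\<bar> + \<bar>D x\<bar> ^ 2 - 3 * a ^ 2))"
            using True by (simp add: g_def)
          also have "\<dots> = ennreal (3 * a\<^sup>2) + ennreal (2 * a * \<bar>D x\<bar> + \<bar>D x\<bar> ^ 2 - 3 * a ^ 2)"
            using nn by (intro ennreal_plus) auto
          finally show ?thesis using True x L by (simp add: A_def)
        next
          case False
          then show ?thesis using x L by (simp add: A_def g_def)
        qed
      qed
      also have "\<dots> = ennreal (3 * a\<^sup>2) * emeasure M A + (\<integral>\<^sup>+x. (\<integral>\<^sup>+t. h x t \<partial>lborel) \<partial>M)"
        by (subst nn_integral_add) (auto simp: nn_integral_cmult_indicator)
      also have "(\<integral>\<^sup>+x. (\<integral>\<^sup>+t. h x t \<partial>lborel) \<partial>M) = (\<integral>\<^sup>+t. (\<integral>\<^sup>+x. h x t \<partial>M) \<partial>lborel)"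
        by (rule PS.Fubini'[symmetric]) (rule hm)
      also have "\<dots> \<le> (\<integral>\<^sup>+t. ennreal (4 * t * exp (- (t\<^sup>2 * \<theta>\<^sup>2) / 2) + C * exp (- \<theta> * (t - a))) * indicator {a..} t \<partial>lborel)"
      proof (rule nn_integral_mono)
        fix t :: real
        show "(\<integral>\<^sup>+x. h x t \<partial>M) \<le> ennreal (4 * t * exp (- (t\<^sup>2 * \<theta>\<^sup>2) / 2) + C * exp (- \<theta> * (t - a))) * indicator {a..} t"
        proof (cases "a \<le> t")
          case False
          then have "(\<lambda>x. h x t) = (\<lambda>x. 0)" by (auto simp: h_def fun_eq_iff)
          then show ?thesis by simp
        next
          case True
          define B where "B = {x \<in> space M. t \<le> \<bar>D x\<bar>}"
          have Bm: "B \<in> sets M" unfolding B_def by measurable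
          have t0: "t \<ge> 0" using True a by linarith
          have "(\<integral>\<^sup>+x. h x t \<partial>M) = (\<integral>\<^sup>+x. ennreal (2 * a + 2 * t) * indicator B x \<partial>M)"
            using True by (intro nn_integral_cong) (auto simp: h_def B_def indicator_def)
          also have "\<dots> = ennreal (2 * a + 2 * t) * emeasure M B"
            using Bm by (rule nn_integral_cmult_indicator)
          also have "\<dots> = ennreal ((2 * a + 2 * t) * measure M B)"
            using a t0 by (simp add: P.emeasure_eq_measure ennreal_mult)
          also have "\<dots> \<le> ennreal ((2 * a + 2 * t) * (2 * exp (- (t\<^sup>2 * \<theta>\<^sup>2) / 2)))"
            using tail[OF t0] a t0 by (intro ennreal_leI mult_left_mono) (auto simp: B_def D_def)
          also have "\<dots> \<le> ennreal (4 * t * exp (- (t\<^sup>2 * \<theta>\<^sup>2) / 2) + C * exp (- \<theta> * (t - a)))"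
          proof (rule ennreal_leI)
            have "exp (- (t\<^sup>2 * \<theta>\<^sup>2) / 2) \<le> exp (1/2) * E * exp (- \<theta> * (t - a))"
              using gauss_pt[OF a(1) assms(4) True] by (simp only: Ea)
            then have "4 * a * exp (- (t\<^sup>2 * \<theta>\<^sup>2) / 2) \<le> 4 * a * (exp (1/2) * E * exp (- \<theta> * (t - a)))"
              using a by (intro mult_left_mono) auto
            then show "(2 * a + 2 * t) * (2 * exp (- (t\<^sup>2 * \<theta>\<^sup>2) / 2)) \<le> 4 * t * exp (- (t\<^sup>2 * \<theta>\<^sup>2) / 2) + C * exp (- \<theta> * (t - a))"
              by (simp add: C_def algebra_simps)
          qed
          finally show ?thesis using True by simp
        qed
      qed
      also have "\<dots> = ennreal (4 * E / \<theta>\<^sup>2 + C / \<theta>)"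
        using FTC_part[OF a(1) assms(4) C] unfolding Ea2 .
      finally have G1: "ennreal (\<integral>x. g x \<partial>M) \<le> ennreal (3 * a\<^sup>2) * emeasure M A + ennreal (4 * E / \<theta>\<^sup>2 + C / \<theta>)"
        by (simp add: add_mono)
      have G2: "ennreal (3 * a\<^sup>2) * emeasure M A \<le> ennreal (3 * a\<^sup>2) * ennreal (2 * E)"
      proof (intro mult_left_mono)
        have "measure M A \<le> 2 * exp (- (a\<^sup>2 * \<theta>\<^sup>2) / 2)"
          using tail[of a] a by (simp add: A_def D_def)
        then have "measure M A \<le> 2 * E" unfolding Ea2 .
        then show "emeasure M A \<le> ennreal (2 * E)"
          by (simp add: P.emeasure_eq_measure ennreal_leI)
      qed auto
      have G3: "ennreal (3 * a\<^sup>2) * ennreal (2 * E) + ennreal (4 * E / \<theta>\<^sup>2 + C / \<theta>) = ennreal (6 * a\<^sup>2 * E + (4 * E / \<theta>\<^sup>2 + C / \<theta>))"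
        using E C assms(4) by (simp add: ennreal_mult[symmetric] ennreal_plus[symmetric] del: ennreal_plus)
      have "ennreal (\<integral>x. g x \<partial>M) \<le> ennreal (3 * a\<^sup>2) * ennreal (2 * E) + ennreal (4 * E / \<theta>\<^sup>2 + C / \<theta>)"
        using G1 G2 by (meson add_right_mono order_trans)
      then have "ennreal (\<integral>x. g x \<partial>M) \<le> ennreal (6 * a\<^sup>2 * E + (4 * E / \<theta>\<^sup>2 + C / \<theta>))"
        by (simp only: G3)
      then show ?thesis
        using E C assms(4) by (subst (asm) ennreal_le_iff) (auto intro: add_nonneg_nonneg)
    qed
    ultimately show ?thesis unfolding C_def by linarith
  qed
  have "p \<ge> V / (2 * a\<^sup>2) - (3 * E + 2 * E / \<kappa>\<^sup>2 + 2 * exp (1/2) * E / \<kappa>)"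
  proof -
    have "V / (2 * a\<^sup>2) \<le> (2 * a\<^sup>2 * p + (6 * a\<^sup>2 * E + (4 * E / \<theta>\<^sup>2 + 4 * a * exp (1/2) * E / \<theta>))) / (2 * a\<^sup>2)"
      using key a by (intro divide_right_mono) auto
    also have "\<dots> = p + (3 * E + 2 * E / \<kappa>\<^sup>2 + 2 * exp (1/2) * E / \<kappa>)"
      unfolding a(2)[symmetric] using a(1) assms(4) by (simp add: field_simps power_mult_distrib power2_eq_square power4_eq_xxxx)
    finally show ?thesis by linarith
  qed
  moreover have "V / (2 * a\<^sup>2) = \<theta>\<^sup>2 * V / (2 * \<kappa>\<^sup>2)"
    using a assms(4) by (simp add: a_def field_simps)
  moreover have "3 * E + 2 * E / \<kappa>\<^sup>2 + 2 * exp (1/2) * E / \<kappa> \<le> 2 * E * (1 + sqrt 2 + sqrt (2 * pi) / \<kappa> + 1 / \<kappa>\<^sup>2)"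
  proof -
    have s2: "sqrt 2 \<ge> 1" by simp
    have "2 \<le> sqrt (2 * pi)" by (rule real_le_rsqrt) (use pi_gt3 in simp)
    then have sp: "exp (1/2) \<le> sqrt (2 * pi)" using exp_half_le2 by linarith
    have h1: "2 * exp (1/2) * E / \<kappa> \<le> 2 * sqrt (2 * pi) * E / \<kappa>"
      using sp E assms(6) by (intro divide_right_mono mult_right_mono mult_left_mono) auto
    have h2: "E \<le> 2 * sqrt 2 * E"
    proof -
      have "1 \<le> 2 * sqrt 2" using s2 by linarith
      then have "1 * E \<le> (2 * sqrt 2) * E" using E by (intro mult_right_mono) auto
      then show ?thesis by simp
    qed
    have eq: "2 * E * (1 + sqrt 2 + sqrt (2 * pi) / \<kappa> + 1 / \<kappa>\<^sup>2) = 2 * E + 2 * sqrt 2 * E + 2 * sqrt (2 * pi) * E / \<kappa> + 2 * E / \<kappa>\<^sup>2"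
      by (simp add: algebra_simps)
    show ?thesis unfolding eq using h1 h2 by linarith
  qed
  ultimately have "\<theta>\<^sup>2 * V / (2 * \<kappa>\<^sup>2) - 2 * E * (1 + sqrt 2 + sqrt (2 * pi) / \<kappa> + 1 / \<kappa>\<^sup>2) \<le> p"
    by linarith
  then show ?thesis unfolding p_def Sp_def V_def \<mu>_def E_def .
qed

end
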